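(* Let $q_\sigma$ be a noise distribution satisfying the Assumption below, let $p$ be a probability distribution on $\mathcal A$ with finite support, let $a'\in\mathcal A$ with $q_\sigma(a'\mid a)>0$ for all $a\in\mathrm{supp}(p)$ and $\sigma>0$, and let $S:\mathcal A\times\mathcal A\to\mathbb R$ be any function. Define $$p(a\mid a')=\frac{q_\sigma(a'\mid a)\,p(a)}{\sum_{b\in\mathrm{supp}(p)}q_\sigma(a'\mid b)\,p(b)}.$$ Then $$\lim_{\sigma\to0^+}\sum_{a\in\mathrm{supp}(p)}S(a,a')\,p(a\mid a')=\frac{\sum_{a\in C(a',p)}S(a,a')\,p(a)}{\sum_{a\in C(a',p)}p(a)}=\mathbb{E}_{a\sim p_C(\cdot\mid a')}\big[S(a,a')\big],$$ where $C(a',p)=\{a\in\mathrm{supp}(p):\ \|a'-a\|_2^2\le\|a'-y\|_2^2\ \text{for all } y\in\mathrm{supp}(p)\}$ and $p_C(a\mid a')=p(a)/\sum_{b\in C(a',p)}p(b)$ for $a\in C(a',p)$.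
   Context: Action space $\mathcal A\subseteq\mathbb R^n$. A noise distribution $q_\sigma(\cdot\mid a)$ is a probability density/mass function parameterized by $a\in\mathcal A$ and $\sigma>0$ whose support contains $\mathcal A$. Assumption: for all $a,a_1,a_2\in\mathcal A$: (1) if $\|a_1-a\|_2^2>\|a_2-a\|_2^2$ then $\lim_{\sigma\to0^+}q_\sigma(a\mid a_1)/q_\sigma(a\mid a_2)=0$; (2) if $\|a_1-a\|_2^2=\|a_2-a\|_2^2$ then $\lim_{\sigma\to0^+}q_\sigma(a\mid a_1)/q_\sigma(a\mid a_2)=1$. *)

theory Defs
  imports "HOL-Analysis.Analysis" "HOL-Probability.Probability_Mass_Function"
begin

text \<open>A noise distribution: q sigma a x is the value q_sigma(x | a) of the
density/mass function with parameter a in the action space AA and sigma > 0.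
It is nonnegative and its support contains AA (positive on AA).\<close>
definition noise_distribution ::
  "('a::real_normed_vector) set \<Rightarrow> (real \<Rightarrow> 'a \<Rightarrow> 'a \<Rightarrow> real) \<Rightarrow> bool" where
  "noise_distribution AA q \<longleftrightarrow>
     (\<forall>\<sigma>>0. \<forall>a\<in>AA. (\<forall>x. 0 \<le> q \<sigma> a x) \<and> (\<forall>x\<in>AA. 0 < q \<sigma> a x))"

definition noise_assumption ::
  "('a::real_normed_vector) set \<Rightarrow> (real \<Rightarrow> 'a \<Rightarrow> 'a \<Rightarrow> real) \<Rightarrow> bool" where
  "noise_assumption AA q \<longleftrightarrow>
     (\<forall>a\<in>AA. \<forall>a1\<in>AA. \<forall>a2\<in>AA.
        (norm (a1 - a)^2 > norm (a2 - a)^2 \<longrightarrow>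
           ((\<lambda>\<sigma>. q \<sigma> a1 a / q \<sigma> a2 a) \<longlongrightarrow> 0) (at_right 0)) \<and>
        (norm (a1 - a)^2 = norm (a2 - a)^2 \<longrightarrow>
           ((\<lambda>\<sigma>. q \<sigma> a1 a / q \<sigma> a2 a) \<longlongrightarrow> 1) (at_right 0)))"

definition posterior ::
  "(real \<Rightarrow> 'a \<Rightarrow> 'a \<Rightarrow> real) \<Rightarrow> real \<Rightarrow> 'a pmf \<Rightarrow> 'a \<Rightarrow> 'a \<Rightarrow> real" where
  "posterior q \<sigma> p a' a =
     q \<sigma> a a' * pmf p a / (\<Sum>b\<in>set_pmf p. q \<sigma> b a' * pmf p b)"

definition closest_set :: "('a::real_normed_vector) \<Rightarrow> 'a pmf \<Rightarrow> 'a set" where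
  "closest_set a' p =
     {a\<in>set_pmf p. \<forall>y\<in>set_pmf p. norm (a' - a)^2 \<le> norm (a' - y)^2}"

definition pC :: "'a pmf \<Rightarrow> ('a::real_normed_vector) \<Rightarrow> 'a \<Rightarrow> real" where
  "pC p a' a = pmf p a / (\<Sum>b\<in>closest_set a' p. pmf p b)"

end

theory Submission
  imports Defs
begin

theorem mainTheorem3:
  fixes AA :: "(real ^ 'n) set"
    and q :: "real \<Rightarrow> real ^ 'n \<Rightarrow> real ^ 'n \<Rightarrow> real"
    and p :: "(real ^ 'n) pmf"
    and a' :: "real ^ 'n"
    and S :: "real ^ 'n \<Rightarrow> real ^ 'n \<Rightarrow> real"
  assumes "noise_distribution AA q"
    and "noise_assumption AA q"
    and "set_pmf p \<subseteq> AA"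
    and "finite (set_pmf p)"
    and "a' \<in> AA"
    and "\<And>a \<sigma>. a \<in> set_pmf p \<Longrightarrow> \<sigma> > 0 \<Longrightarrow> q \<sigma> a a' > 0"
  shows "((\<lambda>\<sigma>. \<Sum>a\<in>set_pmf p. S a a' * posterior q \<sigma> p a' a) \<longlongrightarrow>
           (\<Sum>a\<in>closest_set a' p. S a a' * pmf p a) / (\<Sum>a\<in>closest_set a' p. pmf p a))
           (at_right 0)
       \<and> (\<Sum>a\<in>closest_set a' p. S a a' * pmf p a) / (\<Sum>a\<in>closest_set a' p. pmf p a)
           = (\<Sum>a\<in>closest_set a' p. pC p a' a * S a a')"
proof
  define P where "P = set_pmf p"
  define C where "C = closest_set a' p"
  define d where "d = (\<lambda>a. norm (a' - a)^2)"
  have finP: "finite P" using assms(4) P_def by simp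
  have neP: "P \<noteq> {}" unfolding P_def by (simp add: set_pmf_not_empty)
  have "Min (d ` P) \<in> d ` P" using finP neP by simp
  then obtain a0 where a0P: "a0 \<in> P" and a0d: "d a0 = Min (d ` P)" by auto
  have a0min: "\<forall>y\<in>P. d a0 \<le> d y" using finP a0d by simp
  have a0C: "a0 \<in> C" using a0P a0min unfolding C_def closest_set_def P_def d_def by auto
  have CP: "C \<subseteq> P" unfolding C_def closest_set_def P_def by auto
  have finC: "finite C" using CP finP finite_subset by blast
  have Dpos: "(\<Sum>a\<in>C. pmf p a) > 0"
  proof -
    have "(\<Sum>a\<in>C. pmf p a) \<ge> (\<Sum>a\<in>{a0}. pmf p a)"
      by (rule sum_mono2[OF finC]) (use a0C in auto)
    moreover have "pmf p a0 > 0" using a0P P_def by (simp add: pmf_positive)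
    ultimately show ?thesis by simp
  qed
  define r where "r = (\<lambda>a \<sigma>. q \<sigma> a a' / q \<sigma> a0 a')"
  define L where "L = (\<lambda>a. if a \<in> C then 1 else (0::real))"
  have nd: "norm (a - a') ^ 2 = d a" for a unfolding d_def by (simp add: norm_minus_commute)
  have rlim: "(r a \<longlongrightarrow> L a) (at_right 0)" if aP: "a \<in> P" for a
  proof (cases "a \<in> C")
    case True
    have "d a = d a0" using True a0C unfolding C_def closest_set_def d_def by (auto intro: order_antisym)
    then have e: "norm (a - a')^2 = norm (a0 - a')^2" by (simp add: nd)
    have "a \<in> AA" "a0 \<in> AA" using aP a0P assms(3) P_def by auto
    then have "((\<lambda>\<sigma>. q \<sigma> a a' / q \<sigma> a0 a') \<longlongrightarrow> 1) (at_right 0)"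
      using assms(2) assms(5) e unfolding noise_assumption_def by blast
    then show ?thesis using True unfolding r_def L_def by simp
  next
    case False
    have "\<not> (\<forall>y\<in>P. d a \<le> d y)" using False aP unfolding C_def closest_set_def d_def P_def by simp
    then obtain y where "y \<in> P" "d a > d y" by (auto simp: not_le)
    then have "d a > d a0" using a0min by force
    then have e: "norm (a - a')^2 > norm (a0 - a')^2" by (simp add: nd)
    have "a \<in> AA" "a0 \<in> AA" using aP a0P assms(3) P_def by auto
    then have "((\<lambda>\<sigma>. q \<sigma> a a' / q \<sigma> a0 a') \<longlongrightarrow> 0) (at_right 0)"
      using assms(2) assms(5) e unfolding noise_assumption_def by blast
    then show ?thesis using False unfolding r_def L_def by simp
  qed
  have lim: "((\<lambda>\<sigma>. (\<Sum>a\<in>P. S a a' * (r a \<sigma> * pmf p a)) / (\<Sum>a\<in>P. r a \<sigma> * pmf p a)) \<longlongrightarrow>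
      (\<Sum>a\<in>P. S a a' * (L a * pmf p a)) / (\<Sum>a\<in>P. L a * pmf p a)) (at_right 0)"
  proof (rule tendsto_divide)
    show "((\<lambda>\<sigma>. \<Sum>a\<in>P. S a a' * (r a \<sigma> * pmf p a)) \<longlongrightarrow> (\<Sum>a\<in>P. S a a' * (L a * pmf p a))) (at_right 0)"
      by (intro tendsto_sum tendsto_mult tendsto_const rlim)
    show "((\<lambda>\<sigma>. \<Sum>a\<in>P. r a \<sigma> * pmf p a) \<longlongrightarrow> (\<Sum>a\<in>P. L a * pmf p a)) (at_right 0)"
      by (intro tendsto_sum tendsto_mult tendsto_const rlim)
    have "(\<Sum>a\<in>P. L a * pmf p a) = (\<Sum>a\<in>C. pmf p a)"
      proof -
    have "(\<Sum>a\<in>P. L a * pmf p a) = (\<Sum>a\<in>P. if a \<in> C then pmf p a else 0)"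
      by (rule sum.cong) (auto simp: L_def)
    also have "\<dots> = (\<Sum>a\<in>C. pmf p a)"
      by (simp only: sum.inter_restrict[OF finP, symmetric] Int_absorb1[OF CP])
    finally show ?thesis .
  qed
    then show "(\<Sum>a\<in>P. L a * pmf p a) \<noteq> 0" using Dpos by simp
  qed
  have e1: "(\<Sum>a\<in>P. S a a' * (L a * pmf p a)) = (\<Sum>a\<in>C. S a a' * pmf p a)"
    proof -
    have "(\<Sum>a\<in>P. S a a' * (L a * pmf p a)) = (\<Sum>a\<in>P. if a \<in> C then S a a' * pmf p a else 0)"
      by (rule sum.cong) (auto simp: L_def)
    also have "\<dots> = (\<Sum>a\<in>C. S a a' * pmf p a)"
      by (simp only: sum.inter_restrict[OF finP, symmetric] Int_absorb1[OF CP])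
    finally show ?thesis .
  qed
  have e2: "(\<Sum>a\<in>P. L a * pmf p a) = (\<Sum>a\<in>C. pmf p a)"
    proof -
    have "(\<Sum>a\<in>P. L a * pmf p a) = (\<Sum>a\<in>P. if a \<in> C then pmf p a else 0)"
      by (rule sum.cong) (auto simp: L_def)
    also have "\<dots> = (\<Sum>a\<in>C. pmf p a)"
      by (simp only: sum.inter_restrict[OF finP, symmetric] Int_absorb1[OF CP])
    finally show ?thesis .
  qed
  have ev: "\<forall>\<^sub>F \<sigma> in at_right 0. (\<Sum>a\<in>P. S a a' * (r a \<sigma> * pmf p a)) / (\<Sum>a\<in>P. r a \<sigma> * pmf p a)
      = (\<Sum>a\<in>set_pmf p. S a a' * posterior q \<sigma> p a' a)"
  proof (rule eventually_mono[OF eventually_at_right_less[of "0::real"]])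
    fix \<sigma> :: real assume "0 < \<sigma>"
    then have c: "q \<sigma> a0 a' > 0" using assms(6) a0P P_def by simp
    have "(\<Sum>a\<in>P. S a a' * (r a \<sigma> * pmf p a)) = (\<Sum>a\<in>P. S a a' * (q \<sigma> a a' * pmf p a)) / q \<sigma> a0 a'"
      unfolding r_def sum_divide_distrib by (rule sum.cong) auto
    moreover have "(\<Sum>a\<in>P. r a \<sigma> * pmf p a) = (\<Sum>a\<in>P. q \<sigma> a a' * pmf p a) / q \<sigma> a0 a'"
      unfolding r_def sum_divide_distrib by (rule sum.cong) auto
    ultimately have "(\<Sum>a\<in>P. S a a' * (r a \<sigma> * pmf p a)) / (\<Sum>a\<in>P. r a \<sigma> * pmf p a)
       = (\<Sum>a\<in>P. S a a' * (q \<sigma> a a' * pmf p a)) / (\<Sum>a\<in>P. q \<sigma> a a' * pmf p a)"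
      using c by simp
    also have "\<dots> = (\<Sum>a\<in>P. S a a' * (q \<sigma> a a' * pmf p a) / (\<Sum>b\<in>P. q \<sigma> b a' * pmf p b))"
      by (simp add: sum_divide_distrib)
    also have "\<dots> = (\<Sum>a\<in>set_pmf p. S a a' * posterior q \<sigma> p a' a)"
      unfolding posterior_def P_def by simp
    finally show "(\<Sum>a\<in>P. S a a' * (r a \<sigma> * pmf p a)) / (\<Sum>a\<in>P. r a \<sigma> * pmf p a)
      = (\<Sum>a\<in>set_pmf p. S a a' * posterior q \<sigma> p a' a)" .
  qed
  show "((\<lambda>\<sigma>. \<Sum>a\<in>set_pmf p. S a a' * posterior q \<sigma> p a' a) \<longlongrightarrow>
           (\<Sum>a\<in>closest_set a' p. S a a' * pmf p a) / (\<Sum>a\<in>closest_set a' p. pmf p a))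
           (at_right 0)"
    using tendsto_cong[OF ev] lim e1 e2 C_def by simp
  show "(\<Sum>a\<in>closest_set a' p. S a a' * pmf p a) / (\<Sum>a\<in>closest_set a' p. pmf p a)
           = (\<Sum>a\<in>closest_set a' p. pC p a' a * S a a')"
    unfolding pC_def sum_divide_distrib by (rule sum.cong) auto
qed

end
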